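(* Let $T$ be a transitive tournament with $n$ vertices and let $k$ be a nonnegative integer. Then $T$ has at most $A\cdot\exp(C\sqrt{k})\cdot(n+1)$ $k$-cuts, where $C=\pi\sqrt{2/3}$ and $A$ is a constant such that the partition numbers satisfy $p(m)\le \frac{A}{m+1}\exp(C\sqrt{m})$ for every nonnegative integer $m$.
   Context: A transitive tournament with ordering $(v_1,\dots,v_n)$ is the tournament on $\{v_1,\dots,v_n\}$ in which $(v_i,v_j)$ is an arc iff $i<j$. A $k$-cut of a digraph $T$ is an ordered partition $(X,Y)$ of $V(T)$ (either part may be empty) such that there are at most $k$ arcs $(u,v)\in E(T)$ with $u\in Y$ and $v\in X$. The partition number $p(m)$ is the number of multisets of positive integers summing to $m$. It is known (Hardy–Ramanujan) that there is an absolute constant $A$ with $p(m)\le\frac{A}{m+1}\exp(\pi\sqrt{2/3}\sqrt{m})$ for all $m\ge 0$. *)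

theory Defs
  imports "HOL-Analysis.Analysis" "HOL-Library.Multiset"
begin

definition partition_number :: "nat \<Rightarrow> nat" where
  "partition_number m = card {M :: nat multiset. (\<forall>x\<in>#M. 0 < x) \<and> sum_mset M = m}"

definition transitive_tournament_arcs :: "'a list \<Rightarrow> ('a \<times> 'a) set" where
  "transitive_tournament_arcs vs = {(vs ! i, vs ! j) | i j. i < j \<and> j < length vs}"

definition k_cuts :: "'a set \<Rightarrow> ('a \<times> 'a) set \<Rightarrow> nat \<Rightarrow> ('a set \<times> 'a set) set" where
  "k_cuts V E k = {(X, Y). X \<union> Y = V \<and> X \<inter> Y = {} \<and>
      card {(u, v) \<in> E. u \<in> Y \<and> v \<in> X} \<le> k}"

end

theory Submission
  imports Defs
begin

fun code :: "bool list \<Rightarrow> nat multiset" where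
  "code [] = {#}"
| "code (b#w) = (if b then image_mset Suc (code w) else add_mset 0 (code w))"

lemma size_code: "size (code w) = length (filter Not w)"
  by (induction w) auto

lemma code_inj: "length w1 = length w2 \<Longrightarrow> code w1 = code w2 \<Longrightarrow> w1 = w2"
proof (induction w1 arbitrary: w2)
  case Nil thus ?case by simp
next
  case (Cons a w1)
  then obtain b w2' where w2: "w2 = b # w2'" by (cases w2) auto
  have l: "length w1 = length w2'" using Cons.prems w2 by simp
  show ?case
  proof (cases a; cases b)
    assume "a" "b"
    then have "image_mset Suc (code w1) = image_mset Suc (code w2')" using Cons.prems w2 by simp
    then have "image_mset (\<lambda>x. x - 1) (image_mset Suc (code w1)) = image_mset (\<lambda>x. x - 1) (image_mset Suc (code w2'))" by simp
    then have "code w1 = code w2'" by (simp add: multiset.map_comp o_def)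
    then show ?thesis using Cons.IH l w2 \<open>a\<close> \<open>b\<close> by simp
  next
    assume "\<not>a" "\<not>b"
    then have "code w1 = code w2'" using Cons.prems w2 by simp
    then show ?thesis using Cons.IH l w2 \<open>\<not>a\<close> \<open>\<not>b\<close> by simp
  next
    assume "a" "\<not>b"
    then have "image_mset Suc (code w1) = add_mset 0 (code w2')" using Cons.prems w2 by simp
    then have "0 \<in># image_mset Suc (code w1)" by simp
    then show ?thesis by auto
  next
    assume "\<not>a" "b"
    then have "add_mset 0 (code w1) = image_mset Suc (code w2')" using Cons.prems w2 by simp
    then have "0 \<in># image_mset Suc (code w2')" by (metis union_single_eq_member)
    then show ?thesis by auto
  qed
qed

lemma sum_image_Suc: "sum_mset (image_mset Suc M) = size M + sum_mset M"
  by (induction M) auto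

definition inv2 :: "bool list \<Rightarrow> nat" where
  "inv2 w = card {(i,j). i<j \<and> j<length w \<and> w!i \<and> \<not> w!j}"

lemma inv2_code: "inv2 w = sum_mset (code w)"
proof (induction w)
  case Nil thus ?case by (simp add: inv2_def)
next
  case (Cons b w)
  define S where "S = {(i,j). i<j \<and> j<length w \<and> w!i \<and> \<not> w!j}"
  define T where "T = (if b then (\<lambda>j. (0::nat, Suc j)) ` {j. j < length w \<and> \<not> w!j} else {})"
  have fS: "finite S" unfolding S_def
    by (rule finite_subset[of _ "{..<length w} \<times> {..<length w}"]) auto
  have fT: "finite T" unfolding T_def by auto
  have eq: "{(i,j). i<j \<and> j<length (b#w) \<and> (b#w)!i \<and> \<not> (b#w)!j}
      = T \<union> (\<lambda>(i,j). (Suc i, Suc j)) ` S"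
  proof (rule set_eqI, clarify)
    fix i j
    show "((i,j) \<in> {(i,j). i<j \<and> j<length (b#w) \<and> (b#w)!i \<and> \<not> (b#w)!j}) =
          ((i,j) \<in> T \<union> (\<lambda>(i,j). (Suc i, Suc j)) ` S)"
      unfolding S_def T_def
      by (cases i; cases j) (auto simp: image_iff)
  qed
  have disj: "T \<inter> (\<lambda>(i,j). (Suc i, Suc j)) ` S = {}" unfolding T_def by auto
  have inj: "inj_on (\<lambda>(i,j). (Suc i, Suc j)) S" by (auto simp: inj_on_def)
  have cT: "card T = (if b then length (filter Not w) else 0)"
    unfolding T_def by (auto simp: card_image inj_on_def length_filter_conv_card)
  have "inv2 (b#w) = card T + card S"
    unfolding inv2_def eq
    by (subst card_Un_disjoint) (use fS fT disj inj in \<open>auto simp: card_image\<close>)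
  also have "card S = inv2 w" by (simp add: S_def inv2_def)
  finally show ?case using Cons.IH cT
    by (simp add: size_code sum_image_Suc)
qed


lemma pos_size_le: "(\<forall>x\<in>#M. 0<x) \<Longrightarrow> size M \<le> sum_mset (M::nat multiset)"
  by (induction M) auto

lemma elem_le_sum: "x \<in># M \<Longrightarrow> x \<le> sum_mset (M::nat multiset)"
  by (induction M) auto

definition Q :: "nat \<Rightarrow> nat multiset set" where
  "Q k = {M. (\<forall>x\<in>#M. 0<x) \<and> sum_mset M \<le> k}"

lemma finite_Q: "finite (Q k)"
proof (rule finite_subset)
  show "Q k \<subseteq> (\<Union>s\<in>{0..k}. multisets_of_size {0..k} s)"
  proof
    fix M assume "M \<in> Q k"
    then have p: "\<forall>x\<in>#M. 0<x" and s: "sum_mset M \<le> k" by (auto simp: Q_def)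
    have "size M \<le> k" using pos_size_le[OF p] s by simp
    moreover have "set_mset M \<subseteq> {0..k}" using elem_le_sum s by fastforce
    ultimately show "M \<in> (\<Union>s\<in>{0..k}. multisets_of_size {0..k} s)"
      by (auto simp: multisets_of_size_def)
  qed
  show "finite (\<Union>s\<in>{0..k}. multisets_of_size {0..k} s)" by auto
qed

lemma card_Q: "card (Q k) \<le> (k+1) * partition_number k"
proof -
  define P where "P = {M :: nat multiset. (\<forall>x\<in>#M. 0 < x) \<and> sum_mset M = k}"
  have fP: "finite P" by (rule finite_subset[OF _ finite_Q[of k]]) (auto simp: P_def Q_def)
  define h where "h M = (sum_mset M, M + replicate_mset (k - sum_mset M) (1::nat))" for M
  have "inj_on h (Q k)"
    by (auto simp: inj_on_def h_def)
  moreover have "h ` Q k \<subseteq> {0..k} \<times> P"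
    by (auto simp: h_def Q_def P_def split: if_splits)
  ultimately have "card (Q k) \<le> card ({0..k} \<times> P)"
    using card_inj_on_le fP by blast
  also have "\<dots> = (k+1) * partition_number k"
    by (simp add: card_cartesian_product partition_number_def P_def)
  finally show ?thesis .
qed

lemma zeros: "(\<forall>x\<in>#N. x = 0) \<Longrightarrow> N = replicate_mset (size N) (0::nat)"
  by (induction N) auto

lemma M_recover: "M = filter_mset (\<lambda>x. 0<x) M + replicate_mset (size M - size (filter_mset (\<lambda>x. 0<x) M)) (0::nat)"
proof -
  have 1: "M = filter_mset (\<lambda>x. 0<x) M + filter_mset (\<lambda>x. \<not> 0<x) M"
    by (rule multiset_partition)
  have 2: "filter_mset (\<lambda>x. \<not> 0<x) M = replicate_mset (size (filter_mset (\<lambda>x. \<not> 0<x) M)) 0"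
    by (rule zeros) auto
  have 3: "size M = size (filter_mset (\<lambda>x. 0<x) M) + size (filter_mset (\<lambda>x. \<not> 0<x) M)"
    by (rule trans[OF arg_cong[OF 1, of size] size_union])
  show ?thesis using 1 2 3 by simp
qed

lemma sum_filter_le: "sum_mset (filter_mset P M) \<le> sum_mset (M::nat multiset)"
proof -
  have "sum_mset M = sum_mset (filter_mset P M + filter_mset (\<lambda>x. \<not> P x) M)"
    by (rule arg_cong[OF multiset_partition[of M P], of sum_mset])
  also have "\<dots> = sum_mset (filter_mset P M) + sum_mset (filter_mset (\<lambda>x. \<not> P x) M)"
    by (rule sum_mset.union)
  finally show ?thesis by (simp only: le_add1)
qed

lemma card_lists: "card {w. length w = n \<and> inv2 w \<le> k} \<le> (n+1) * card (Q k)"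
proof -
  define L where "L = {w. length w = n \<and> inv2 w \<le> k}"
  define g where "g w = (length (filter Not w), filter_mset (\<lambda>x. 0<x) (code w))" for w
  have "inj_on g L"
  proof (rule inj_onI)
    fix w1 w2 assume a: "w1 \<in> L" "w2 \<in> L" "g w1 = g w2"
    have "code w1 = code w2"
      using a(3) M_recover[of "code w1"] M_recover[of "code w2"]
      by (simp add: g_def size_code)
    then show "w1 = w2" using code_inj a by (auto simp: L_def)
  qed
  moreover have "g ` L \<subseteq> {0..n} \<times> Q k"
  proof
    fix p assume "p \<in> g ` L"
    then obtain w where w: "w \<in> L" "p = g w" by auto
    have "length (filter Not w) \<le> n" using w(1) length_filter_le[of Not w] by (simp add: L_def)
    moreover have "sum_mset (filter_mset (\<lambda>x. 0<x) (code w)) \<le> k"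
      using sum_filter_le[of "\<lambda>x. 0<x" "code w"] w(1) by (simp add: L_def inv2_code)
    ultimately show "p \<in> {0..n} \<times> Q k" using w by (auto simp: g_def Q_def)
  qed
  moreover have "finite ({0..n} \<times> Q k)" using finite_Q by auto
  ultimately have "card L \<le> card ({0..n} \<times> Q k)" using card_inj_on_le by blast
  thus ?thesis by (simp add: L_def card_cartesian_product)
qed


lemma back_arcs_card:
  assumes d: "distinct vs" and XY: "X \<union> Y = set vs" "X \<inter> Y = {}"
  shows "card {(u, v) \<in> transitive_tournament_arcs vs. u \<in> Y \<and> v \<in> X}
         = inv2 (map (\<lambda>x. x \<in> Y) vs)"
proof -
  define w where "w = map (\<lambda>x. x \<in> Y) vs"
  define P where "P = {(i,j). i<j \<and> j<length w \<and> w!i \<and> \<not> w!j}"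
  define f where "f = (\<lambda>(i,j). (vs!i, vs!j))"
  have "{(u, v) \<in> transitive_tournament_arcs vs. u \<in> Y \<and> v \<in> X} = f ` P"
  proof (rule set_eqI, clarify)
    fix u v
    show "((u, v) \<in> {(u, v) \<in> transitive_tournament_arcs vs. u \<in> Y \<and> v \<in> X}) = ((u,v) \<in> f ` P)"
    proof
      assume "(u, v) \<in> {(u, v) \<in> transitive_tournament_arcs vs. u \<in> Y \<and> v \<in> X}"
      then obtain i j where ij: "u = vs!i" "v = vs!j" "i<j" "j < length vs" "u \<in> Y" "v \<in> X"
        by (auto simp: transitive_tournament_arcs_def)
      have "v \<notin> Y" using ij XY by auto
      then have "(i,j) \<in> P" using ij by (simp add: P_def w_def)
      then show "(u,v) \<in> f ` P" using ij by (auto simp: f_def)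
    next
      assume "(u,v) \<in> f ` P"
      then obtain i j where ij: "u = vs!i" "v = vs!j" "i<j" "j < length vs" "vs!i \<in> Y" "vs!j \<notin> Y"
        by (auto simp: f_def P_def w_def)
      have "vs!j \<in> set vs" using ij by simp
      then have "v \<in> X" using ij XY by auto
      then show "(u, v) \<in> {(u, v) \<in> transitive_tournament_arcs vs. u \<in> Y \<and> v \<in> X}"
        using ij by (auto simp: transitive_tournament_arcs_def)
    qed
  qed
  moreover have "inj_on f P"
  proof (rule inj_onI, clarify)
    fix i j i' j' assume a: "(i,j) \<in> P" "(i',j') \<in> P" "f (i,j) = f (i',j')"
    then have "i < length vs" "j < length vs" "i' < length vs" "j' < length vs"
      by (auto simp: P_def w_def)
    with a(3) d show "i = i' \<and> j = j'" by (auto simp: f_def nth_eq_iff_index_eq)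
  qed
  ultimately show ?thesis by (simp add: card_image inv2_def P_def w_def)
qed

lemma cuts_le_lists:
  assumes d: "distinct vs"
  shows "card (k_cuts (set vs) (transitive_tournament_arcs vs) k)
         \<le> card {w. length w = length vs \<and> inv2 w \<le> k}"
proof -
  define K where "K = k_cuts (set vs) (transitive_tournament_arcs vs) k"
  define L where "L = {w. length w = length vs \<and> inv2 w \<le> k}"
  define f where "f = (\<lambda>(X::'a set,Y::'a set). map (\<lambda>x. x \<in> Y) vs)"
  have fL: "finite L"
    by (rule finite_subset[OF _ finite_lists_length_eq[of "UNIV::bool set" "length vs"]])
       (auto simp: L_def)
  have "inj_on f K"
  proof (rule inj_onI, clarify)
    fix X Y X' Y' assume a: "(X,Y) \<in> K" "(X',Y') \<in> K" "f (X,Y) = f (X',Y')"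
    have e: "\<forall>x\<in>set vs. (x \<in> Y) = (x \<in> Y')"
      using a(3) by (simp add: f_def)
    have "Y = Y'" using a(1,2) e by (auto simp: K_def k_cuts_def)
    moreover have "X = set vs - Y" "X' = set vs - Y'" using a(1,2) by (auto simp: K_def k_cuts_def)
    ultimately show "X = X' \<and> Y = Y'" by simp
  qed
  moreover have "f ` K \<subseteq> L"
  proof clarify
    fix X Y assume a: "(X,Y) \<in> K"
    then have XY: "X \<union> Y = set vs" "X \<inter> Y = {}"
      and c: "card {(u, v) \<in> transitive_tournament_arcs vs. u \<in> Y \<and> v \<in> X} \<le> k"
      by (auto simp: K_def k_cuts_def)
    show "f (X,Y) \<in> L" using back_arcs_card[OF d XY] c by (simp add: f_def L_def)
  qed
  ultimately have "card K \<le> card L" using card_inj_on_le fL by blast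
  thus ?thesis by (simp add: K_def L_def)
qed

theorem mainTheorem7:
  fixes vs :: "'a list" and k :: nat and A :: real
  assumes "distinct vs"
    and "\<forall>m::nat. real (partition_number m)
            \<le> A / (real m + 1) * exp (pi * sqrt (2/3) * sqrt (real m))"
  shows "real (card (k_cuts (set vs) (transitive_tournament_arcs vs) k))
           \<le> A * exp (pi * sqrt (2/3) * sqrt (real k)) * (real (length vs) + 1)"
proof -
  define E where "E = exp (pi * sqrt (2/3) * sqrt (real k))"
  have nat_bound: "card (k_cuts (set vs) (transitive_tournament_arcs vs) k)
      \<le> (length vs + 1) * ((k+1) * partition_number k)"
    using cuts_le_lists[OF assms(1), of k] card_lists[of "length vs" k] card_Q[of k]
    by (meson le_trans mult_le_mono2)
  have p: "real (partition_number k) \<le> A / (real k + 1) * E"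
    using assms(2) by (simp add: E_def)
  have "(real k + 1) * real (partition_number k) \<le> (real k + 1) * (A / (real k + 1) * E)"
    using p by (intro mult_left_mono) auto
  also have "\<dots> = A * E" by simp
  finally have q: "real ((k+1) * partition_number k) \<le> A * E" by (simp add: add.commute distrib_right)
  have "real (card (k_cuts (set vs) (transitive_tournament_arcs vs) k))
      \<le> (real (length vs) + 1) * real ((k+1) * partition_number k)"
    using nat_bound by (metis of_nat_le_iff of_nat_mult of_nat_Suc add.commute Suc_eq_plus1)
  also have "\<dots> \<le> (real (length vs) + 1) * (A * E)"
    using q by (intro mult_left_mono) auto
  finally show ?thesis by (simp add: E_def mult.commute)
qed

end
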